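(* Let $A$ be a circular $m\times n$ matrix and let $\Gamma$ be a circuit in $F(A)$ with winding number $p$. For each node $j\in[n]$ let $r(j)$ be the number of row arcs of $\Gamma$ that jump over $j$. Then $r(j)=p-1$ if $j\in\circ(\Gamma)$, $r(j)=p+1$ if $j\in\otimes(\Gamma)$, and $r(j)=p$ if $j\in\bullet(\Gamma)$.
   Context: Notation: $[n]=\{1,\dots,n\}$ with addition mod $n$ (index $0$ identified with $n$); for $a,c\in[n]$ with $t\ge0$ minimal such that $a+t\equiv c\pmod n$, $[a,c)_n=\{a,\dots,a+t-1\}$ (mod $n$). An $m\times n$ $\{0,1\}$-matrix $A$ is circular if for each row $i$ there are $\ell_i\in[n]$ and an integer $2\le k_i\le n-1$ with row $i$ the incidence vector of $[\ell_i,\ell_i+k_i)_n$. $F(A)$: digraph on $[n]$ (labels mod $n$) with row arcs $a_i=(\ell_i-1,\ell_i+k_i-1)$ ($i\in[m]$, length $k_i$), forward short arcs $(j-1,j)$ (length $1$) and reverse short arcs $(j,j-1)$ (length $-1$), $j\in[n]$. A circuit is a simple directed circuit; winding number $p(\Gamma)$: $p(\Gamma)n=$ sum of lengths of arcs of $\Gamma$. A row arc $a_i$ jumps over node $j$ iff $j\in[\ell_i,\ell_i+k_i)_n$. For a circuit $\Gamma$: $\circ(\Gamma)=\{j:(j-1,j)\in E(\Gamma)\}$, $\otimes(\Gamma)=\{j:(j,j-1)\in E(\Gamma)\}$, $\bullet(\Gamma)=[n]\setminus(\circ(\Gamma)\cup\otimes(\Gamma))$. *)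

theory Defs
  imports Main
begin

text \<open>Nodes/columns are the elements of [n] = {1..n}; an integer label x is reduced
  modulo n to the representative in {1..n} (so index 0 is identified with n).\<close>
definition nd :: "nat \<Rightarrow> int \<Rightarrow> nat" where
  "nd n x = nat ((x - 1) mod int n + 1)"

definition cint :: "nat \<Rightarrow> nat \<Rightarrow> nat \<Rightarrow> nat set" where
  "cint n a c = (let t = (LEAST t::nat. (int a + int t) mod int n = int c mod int n)
                 in {nd n (int a + int s) | s. s < t})"

definition circular_with :: "nat \<Rightarrow> nat \<Rightarrow> (nat \<Rightarrow> nat \<Rightarrow> int) \<Rightarrow> (nat \<Rightarrow> nat) \<Rightarrow> (nat \<Rightarrow> nat) \<Rightarrow> bool" where
  "circular_with m n A l k \<longleftrightarrow>
     (\<forall>i\<in>{1..m}. l i \<in> {1..n} \<and> 2 \<le> k i \<and> k i \<le> n - 1 \<and>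
        (\<forall>j\<in>{1..n}. A i j = (if j \<in> cint n (l i) (nd n (int (l i) + int (k i))) then 1 else 0)))"

definition circular :: "nat \<Rightarrow> nat \<Rightarrow> (nat \<Rightarrow> nat \<Rightarrow> int) \<Rightarrow> bool" where
  "circular m n A \<longleftrightarrow> (\<exists>l k. circular_with m n A l k)"

text \<open>Arcs of F(A) (a multigraph, so arcs are labelled): row arc a_i, forward short arc
  (j-1,j), reverse short arc (j,j-1).\<close>
datatype arc = RowArc nat | FwdArc nat | RevArc nat

fun arc_tail :: "nat \<Rightarrow> (nat \<Rightarrow> nat) \<Rightarrow> (nat \<Rightarrow> nat) \<Rightarrow> arc \<Rightarrow> nat" where
  "arc_tail n l k (RowArc i) = nd n (int (l i) - 1)"
| "arc_tail n l k (FwdArc j) = nd n (int j - 1)"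
| "arc_tail n l k (RevArc j) = nd n (int j)"

fun arc_head :: "nat \<Rightarrow> (nat \<Rightarrow> nat) \<Rightarrow> (nat \<Rightarrow> nat) \<Rightarrow> arc \<Rightarrow> nat" where
  "arc_head n l k (RowArc i) = nd n (int (l i) + int (k i) - 1)"
| "arc_head n l k (FwdArc j) = nd n (int j)"
| "arc_head n l k (RevArc j) = nd n (int j - 1)"

fun arc_len :: "(nat \<Rightarrow> nat) \<Rightarrow> arc \<Rightarrow> int" where
  "arc_len k (RowArc i) = int (k i)"
| "arc_len k (FwdArc j) = 1"
| "arc_len k (RevArc j) = -1"

definition F_arcs :: "nat \<Rightarrow> nat \<Rightarrow> arc set" where
  "F_arcs m n = RowArc ` {1..m} \<union> FwdArc ` {1..n} \<union> RevArc ` {1..n}"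

definition is_circuit :: "nat \<Rightarrow> nat \<Rightarrow> (nat \<Rightarrow> nat) \<Rightarrow> (nat \<Rightarrow> nat) \<Rightarrow> arc list \<Rightarrow> bool" where
  "is_circuit m n l k C \<longleftrightarrow>
     C \<noteq> [] \<and> set C \<subseteq> F_arcs m n \<and>
     (\<forall>i < length C. arc_head n l k (C ! i) = arc_tail n l k (C ! ((i + 1) mod length C))) \<and>
     distinct (map (arc_tail n l k) C)"

definition winding_number :: "nat \<Rightarrow> (nat \<Rightarrow> nat) \<Rightarrow> arc list \<Rightarrow> int \<Rightarrow> bool" where
  "winding_number n k C p \<longleftrightarrow> p * int n = sum_list (map (arc_len k) C)"

definition jumps_over :: "nat \<Rightarrow> (nat \<Rightarrow> nat) \<Rightarrow> (nat \<Rightarrow> nat) \<Rightarrow> nat \<Rightarrow> nat \<Rightarrow> bool" where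
  "jumps_over n l k i j \<longleftrightarrow> j \<in> cint n (l i) (nd n (int (l i) + int (k i)))"

definition circ_nodes :: "arc list \<Rightarrow> nat set" where
  "circ_nodes C = {j. FwdArc j \<in> set C}"

definition otimes_nodes :: "arc list \<Rightarrow> nat set" where
  "otimes_nodes C = {j. RevArc j \<in> set C}"

definition bullet_nodes :: "nat \<Rightarrow> arc list \<Rightarrow> nat set" where
  "bullet_nodes n C = {1..n} - (circ_nodes C \<union> otimes_nodes C)"

definition row_jumps :: "nat \<Rightarrow> (nat \<Rightarrow> nat) \<Rightarrow> (nat \<Rightarrow> nat) \<Rightarrow> arc list \<Rightarrow> nat \<Rightarrow> nat" where
  "row_jumps n l k C j = card {i. RowArc i \<in> set C \<and> jumps_over n l k i j}"

end

theory Submission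
  imports Defs
begin

lemma nd_mod: assumes "n > 0" shows "int (nd n x) mod int n = x mod int n"
proof -
  have "int (nd n x) = (x - 1) mod int n + 1"
    unfolding nd_def using pos_mod_sign[of "int n" "x-1"] assms by simp
  also have "\<dots> mod int n = ((x - 1) + 1) mod int n" by (simp add: mod_add_left_eq)
  finally show ?thesis by simp
qed

lemma nd_range: "n > 0 \<Longrightarrow> nd n x \<in> {1..n}"
proof -
  assume n: "n > 0"
  have "0 \<le> (x-1) mod int n" "(x-1) mod int n < int n" using n by auto
  then show ?thesis unfolding nd_def by auto
qed

lemma nd_eq: "n > 0 \<Longrightarrow> j \<in> {1..n} \<Longrightarrow> nd n x = j \<longleftrightarrow> x mod int n = int j mod int n"
proof -
  assume n: "n > 0" and j: "j \<in> {1..n}"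
  have "nd n x = j \<longleftrightarrow> (x - 1) mod int n = int j - 1"
  proof -
    have "0 \<le> (x-1) mod int n" using n by auto
    then show ?thesis unfolding nd_def by auto
  qed
  also have "\<dots> \<longleftrightarrow> (x - 1) mod int n = (int j - 1) mod int n"
    using j by (simp add: mod_pos_pos_trivial)
  also have "\<dots> \<longleftrightarrow> x mod int n = int j mod int n"
    by (metis diff_add_cancel mod_add_left_eq mod_diff_left_eq)
  finally show ?thesis .
qed

lemma cnt:
  fixes x j k n :: int
  assumes "n > 0" "0 \<le> k" "k \<le> n"
  shows "(x + k - j) div n - (x - j) div n = (if \<exists>y. x < y \<and> y \<le> x + k \<and> y mod n = j mod n then 1 else 0)"
proof -
  define a where "a = x - j"
  define q where "q = a div n"
  define r where "r = a mod n"
  have a: "a = n*q + r" unfolding q_def r_def by simp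
  have r: "0 \<le> r" "r < n" unfolding r_def using assms by auto
  have d: "(a + k) div n = q + (r + k) div n"
    unfolding a using assms by (simp add: add.assoc)
  have e: "(r + k) div n = (if n \<le> r + k then 1 else 0)"
  proof (cases "n \<le> r + k")
    case True
    have "(r+k) div n = ((r + k - n) + n*1) div n" by simp
    also have "\<dots> = (r+k-n) div n + 1" using assms by (simp only: div_mult_self2)
    also have "(r+k-n) div n = 0" using True r assms by (simp add: div_pos_pos_trivial)
    finally show ?thesis using True by simp
  next
    case False then show ?thesis using r assms by (simp add: div_pos_pos_trivial)
  qed
  have ex: "(\<exists>y. x < y \<and> y \<le> x + k \<and> y mod n = j mod n) \<longleftrightarrow> n \<le> r + k"
  proof
    assume "\<exists>y. x < y \<and> y \<le> x + k \<and> y mod n = j mod n"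
    then obtain y where y: "x < y" "y \<le> x + k" "y mod n = j mod n" by blast
    then have "n dvd (y - j)" by (simp add: mod_eq_dvd_iff)
    then obtain z where z: "y - j = n * z" by blast
    have "n*q + r < n * z" "n*z \<le> n*q + r + k" using y z a unfolding a_def by auto
    then have "n*q < n*z" using r by linarith
    then have "q < z" using assms by simp
    then have "q + 1 \<le> z" by simp
    then have "n*(q+1) \<le> n*z" using assms by simp
    then show "n \<le> r + k" using \<open>n*z \<le> n*q + r + k\<close> by (simp add: algebra_simps)
  next
    assume h: "n \<le> r + k"
    show "\<exists>y. x < y \<and> y \<le> x + k \<and> y mod n = j mod n"
    proof (intro exI conjI)
      show "x < j + n*(q+1)" using a r unfolding a_def by (simp add: algebra_simps)
      show "j + n*(q+1) \<le> x + k" using a h unfolding a_def by (simp add: algebra_simps)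
      show "(j + n*(q+1)) mod n = j mod n" by simp
    qed
  qed
  show ?thesis using d e ex unfolding a_def q_def by (simp add: algebra_simps)
qed

lemma modadd: "(a::int) mod n = b mod n \<Longrightarrow> (a + c) mod n = (b + c) mod n"
  by (metis mod_add_left_eq)

lemma arc_mod: assumes "n > 0"
  shows "(int (arc_tail n l k a) + arc_len k a) mod int n = int (arc_head n l k a) mod int n"
proof (cases a)
  case (RowArc i)
  have "(int (arc_tail n l k a) + arc_len k a) mod int n = ((int (l i) - 1) + int (k i)) mod int n"
    using RowArc modadd[OF nd_mod[OF assms]] by simp
  moreover have "int (arc_head n l k a) mod int n = (int (l i) + int (k i) - 1) mod int n"
    using RowArc nd_mod[OF assms] by simp
  ultimately show ?thesis by (simp add: algebra_simps)
next
  case (FwdArc j)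
  have "(int (arc_tail n l k a) + arc_len k a) mod int n = ((int j - 1) + 1) mod int n"
    using FwdArc modadd[OF nd_mod[OF assms]] by simp
  moreover have "int (arc_head n l k a) mod int n = int j mod int n"
    using FwdArc nd_mod[OF assms] by simp
  ultimately show ?thesis by simp
next
  case (RevArc j)
  have "(int (nd n (int j)) + (-1)) mod int n = (int j + (- 1)) mod int n"
    by (rule modadd[OF nd_mod[OF assms]])
  then have "(int (arc_tail n l k a) + arc_len k a) mod int n = (int j + (- 1)) mod int n"
    using RevArc by simp
  moreover have "int (arc_head n l k a) mod int n = (int j - 1) mod int n"
    using RevArc nd_mod[OF assms] by simp
  ultimately show ?thesis by simp
qed

lemma cint_eq: assumes "n > 0" "k < n"
  shows "cint n l (nd n (int l + int k)) = {nd n (int l + int s) | s. s < k}"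
proof -
  have L: "(LEAST t::nat. (int l + int t) mod int n = int (nd n (int l + int k)) mod int n) = k"
  proof (rule Least_equality)
    show "(int l + int k) mod int n = int (nd n (int l + int k)) mod int n"
      using nd_mod[OF assms(1)] by simp
  next
    fix y :: nat assume h: "(int l + int y) mod int n = int (nd n (int l + int k)) mod int n"
    show "k \<le> y"
    proof (rule ccontr)
      assume "\<not> k \<le> y"
      then have y: "y < k" by simp
      have "(int l + int y) mod int n = (int l + int k) mod int n"
        using h nd_mod[OF assms(1)] by simp
      then have "int n dvd (int k - int y)"
        by (metis (no_types, lifting) add_diff_cancel_left mod_eq_dvd_iff)
      moreover have "0 < int k - int y" "int k - int y < int n" using y assms by auto
      ultimately show False using zdvd_imp_le by fastforce
    qed
  qed
  show ?thesis unfolding cint_def L by simp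
qed

lemma jump_iff:
  assumes "n > 0" "k i < n" "j \<in> {1..n}"
  shows "jumps_over n l k i j \<longleftrightarrow> (\<exists>s. s < k i \<and> (int (l i) + int s) mod int n = int j mod int n)"
proof -
  have "\<forall>x. (j = nd n x) = (x mod int n = int j mod int n)" using nd_eq[OF assms(1,3)] by metis
  then show ?thesis unfolding jumps_over_def cint_eq[OF assms(1,2)] by auto
qed

lemma row_c:
  assumes n: "n > 0" and kn: "k i < n" and j: "j \<in> {1..n}"
  shows "(int (arc_tail n l k (RowArc i)) + arc_len k (RowArc i) - int j) div int n
       - (int (arc_tail n l k (RowArc i)) - int j) div int n = (if jumps_over n l k i j then 1 else 0)"
proof -
  define t where "t = int (arc_tail n l k (RowArc i))"
  have tm: "t mod int n = (int (l i) - 1) mod int n" unfolding t_def using nd_mod[OF n] by simp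
  have c: "(t + int (k i) - int j) div int n - (t - int j) div int n
     = (if \<exists>y. t < y \<and> y \<le> t + int (k i) \<and> y mod int n = int j mod int n then 1 else 0)"
    using cnt[of "int n" "int (k i)" t "int j"] n kn by simp
  have e: "(\<exists>y. t < y \<and> y \<le> t + int (k i) \<and> y mod int n = int j mod int n) \<longleftrightarrow> jumps_over n l k i j"
  proof
    assume "\<exists>y. t < y \<and> y \<le> t + int (k i) \<and> y mod int n = int j mod int n"
    then obtain y where y: "t < y" "y \<le> t + int (k i)" "y mod int n = int j mod int n" by blast
    define s where "s = nat (y - t - 1)"
    have s: "int s = y - t - 1" "s < k i" using y unfolding s_def by auto
    have "(int (l i) + int s) mod int n = ((int (l i) - 1) + (int s + 1)) mod int n" by simp
    also have "\<dots> = (t + (int s + 1)) mod int n" using tm by (metis mod_add_left_eq)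
    also have "\<dots> = y mod int n" using s by simp
    finally have "(int (l i) + int s) mod int n = int j mod int n" using y(3) by simp
    then show "jumps_over n l k i j" using jump_iff[of n k i j l, OF n kn j] s(2) by blast
  next
    assume "jumps_over n l k i j"
    then obtain s where s: "s < k i" "(int (l i) + int s) mod int n = int j mod int n"
      using jump_iff[of n k i j l, OF n kn j] by auto
    have "(t + (int s + 1)) mod int n = ((int (l i) - 1) + (int s + 1)) mod int n"
      using tm by (metis mod_add_left_eq)
    also have "\<dots> = int j mod int n" using s by simp
    finally show "\<exists>y. t < y \<and> y \<le> t + int (k i) \<and> y mod int n = int j mod int n"
      using s by (intro exI[of _ "t + (int s + 1)"]) auto
  qed
  show ?thesis using c e unfolding t_def by simp
qed

lemma ex1: "(\<exists>y::int. t < y \<and> y \<le> t + 1 \<and> P y) \<longleftrightarrow> P (t+1)"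
proof
  assume "\<exists>y. t < y \<and> y \<le> t + 1 \<and> P y"
  then obtain y where "t<y" "y\<le>t+1" "P y" by blast
  moreover then have "y = t+1" by simp
  ultimately show "P (t+1)" by simp
next
  assume "P (t+1)" then show "\<exists>y. t < y \<and> y \<le> t + 1 \<and> P y" by (intro exI[of _ "t+1"]) simp
qed

lemma fwd_c:
  assumes n: "n > 0" and j: "j \<in> {1..n}" and j': "j' \<in> {1..n}"
  shows "(int (arc_tail n l k (FwdArc j')) + arc_len k (FwdArc j') - int j) div int n
       - (int (arc_tail n l k (FwdArc j')) - int j) div int n = (if j' = j then 1 else 0)"
proof -
  define t where "t = int (arc_tail n l k (FwdArc j'))"
  have tm: "t mod int n = (int j' - 1) mod int n" unfolding t_def using nd_mod[OF n] by simp
  have c: "(t + 1 - int j) div int n - (t - int j) div int n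
     = (if \<exists>y. t < y \<and> y \<le> t + 1 \<and> y mod int n = int j mod int n then 1 else 0)"
    using cnt[of "int n" 1 t "int j"] n j' by simp
  have "(\<exists>y. t < y \<and> y \<le> t + 1 \<and> y mod int n = int j mod int n) \<longleftrightarrow> (t + 1) mod int n = int j mod int n"
    by (rule ex1)
  also have "(t+1) mod int n = int j' mod int n" using tm by (metis diff_add_cancel mod_add_left_eq)
  also have "int j' mod int n = int j mod int n \<longleftrightarrow> j' = j"
  proof -
    have "nd n (int j') = j'" using nd_eq[OF n j'] by simp
    then show ?thesis using nd_eq[OF n j, of "int j'"] by auto
  qed
  finally show ?thesis using c unfolding t_def by simp
qed

lemma rev_c:
  assumes n: "n > 0" and j: "j \<in> {1..n}" and j': "j' \<in> {1..n}"
  shows "(int (arc_tail n l k (RevArc j')) + arc_len k (RevArc j') - int j) div int n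
       - (int (arc_tail n l k (RevArc j')) - int j) div int n = (if j' = j then -1 else 0)"
proof -
  define t where "t = int j' - 1"
  have c: "(t + 1 - int j) div int n - (t - int j) div int n
     = (if \<exists>y. t < y \<and> y \<le> t + 1 \<and> y mod int n = int j mod int n then 1 else 0)"
    using cnt[of "int n" 1 t "int j"] n j' by simp
  have "(\<exists>y. t < y \<and> y \<le> t + 1 \<and> y mod int n = int j mod int n) \<longleftrightarrow> (t + 1) mod int n = int j mod int n"
    by (rule ex1)
  also have "(t+1) = int j'" unfolding t_def by simp
  also have "int j' mod int n = int j mod int n \<longleftrightarrow> j' = j"
  proof -
    have "nd n (int j') = j'" using nd_eq[OF n j'] by simp
    then show ?thesis using nd_eq[OF n j, of "int j'"] by auto
  qed
  finally have e: "(\<exists>y. t < y \<and> y \<le> int j' \<and> y mod int n = int j mod int n) \<longleftrightarrow> j' = j" .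
  have t1: "t + 1 = int j'" unfolding t_def by simp
  have "nd n (int j') = j'" using nd_eq[OF n j'] by simp
  then have tl: "int (arc_tail n l k (RevArc j')) = int j'" by simp
  have c': "(int j' - int j) div int n - (int j' - 1 - int j) div int n = (if j' = j then 1 else 0)"
    using c e unfolding t1 unfolding t_def by simp
  show ?thesis unfolding tl using c' by (simp add: algebra_simps)
qed

lemma sum_rot: "sum_list (map (f::'a \<Rightarrow> 'b::comm_monoid_add) (rotate1 xs)) = sum_list (map f xs)"
  by (cases xs) (simp_all add: add.commute)

lemma mod2: assumes "a < (N::nat)" "a = (((a + 1) mod N) + 1) mod N" shows "N \<le> 2"
proof (rule ccontr)
  assume "\<not> N \<le> 2"
  then have "((a + 1) mod N + 1) mod N = (a + 2) mod N" by (simp add: mod_Suc_eq)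
  then have "a = (a+2) mod N" using assms by simp
  moreover have "(a + 2) mod N = (if a + 2 < N then a + 2 else a + 2 - N)"
    using assms \<open>\<not> N \<le> 2\<close> by (auto simp: mod_if)
  ultimately show False using \<open>\<not> N \<le> 2\<close> assms by (auto split: if_splits)
qed

lemma not_both:
  assumes n: "n > 0" and j: "j \<in> {1..n}" and circ: "is_circuit m n l k C"
    and ex: "\<not> (\<exists>j. set C = {FwdArc j, RevArc j})"
    and f: "FwdArc j \<in> set C" and r: "RevArc j \<in> set C"
  shows False
proof -
  define N where "N = length C"
  obtain a where a: "a < N" "C ! a = FwdArc j" using f unfolding N_def by (auto simp: in_set_conv_nth)
  obtain b where b: "b < N" "C ! b = RevArc j" using r unfolding N_def by (auto simp: in_set_conv_nth)
  have N0: "N > 0" using a by simp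
  have hd: "\<And>i. i < N \<Longrightarrow> arc_head n l k (C ! i) = arc_tail n l k (C ! ((i + 1) mod N))"
    using circ unfolding is_circuit_def N_def by blast
  have dist: "distinct (map (arc_tail n l k) C)" using circ unfolding is_circuit_def by blast
  have inj: "\<And>x y. x < N \<Longrightarrow> y < N \<Longrightarrow> arc_tail n l k (C ! x) = arc_tail n l k (C ! y) \<Longrightarrow> x = y"
    using dist unfolding N_def by (metis length_map nth_eq_iff_index_eq nth_map)
  have ndj: "nd n (int j) = j" using nd_eq[OF n j] by simp
  have 1: "(a + 1) mod N = b"
  proof (rule inj)
    show "(a + 1) mod N < N" using N0 by simp
    show "b < N" by fact
    show "arc_tail n l k (C ! ((a + 1) mod N)) = arc_tail n l k (C ! b)"
      using hd[OF a(1)] a b ndj by simp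
  qed
  have 2: "(b + 1) mod N = a"
  proof (rule inj)
    show "(b + 1) mod N < N" using N0 by simp
    show "a < N" by fact
    show "arc_tail n l k (C ! ((b + 1) mod N)) = arc_tail n l k (C ! a)"
      using hd[OF b(1)] a b by simp
  qed
  have "N \<le> 2" using mod2[of a N] a 1 2 by simp
  moreover have "a \<noteq> b" using a b by auto
  ultimately have "N = 2" using a b by linarith
  then obtain x y where C: "C = [x, y]" unfolding N_def
    by (metis One_nat_def Suc_1 length_0_conv length_Suc_conv)
  have "set C = {FwdArc j, RevArc j}"
    using a b \<open>N = 2\<close> \<open>a \<noteq> b\<close> unfolding C by (auto simp: less_2_cases_iff)
  then show False using ex by blast
qed

theorem lemma6p1:
  fixes m n :: nat and A :: "nat \<Rightarrow> nat \<Rightarrow> int" and l k :: "nat \<Rightarrow> nat"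
    and C :: "arc list" and p :: int
  assumes "circular_with m n A l k"
    and "is_circuit m n l k C"
    and "\<not> (\<exists>j. set C = {FwdArc j, RevArc j})"
    and "winding_number n k C p"
  shows "\<forall>j\<in>{1..n}.
           (j \<in> circ_nodes C \<longrightarrow> int (row_jumps n l k C j) = p - 1) \<and>
           (j \<in> otimes_nodes C \<longrightarrow> int (row_jumps n l k C j) = p + 1) \<and>
           (j \<in> bullet_nodes n C \<longrightarrow> int (row_jumps n l k C j) = p)"
proof
  fix j assume j: "j \<in> {1..n}"
  have n: "n > 0" using j by simp
  have cw: "\<And>i. i \<in> {1..m} \<Longrightarrow> l i \<in> {1..n} \<and> 2 \<le> k i \<and> k i \<le> n - 1"
    using assms(1) unfolding circular_with_def by blast
  have Cne: "C \<noteq> []" and CF: "set C \<subseteq> F_arcs m n"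
    and hd: "\<And>i. i < length C \<Longrightarrow> arc_head n l k (C ! i) = arc_tail n l k (C ! ((i + 1) mod length C))"
    and dist: "distinct (map (arc_tail n l k) C)"
    using assms(2) unfolding is_circuit_def by blast+
  have distC: "distinct C" using dist distinct_map by blast
  define T where "T a = int (arc_tail n l k a)" for a
  define H where "H a = int (arc_head n l k a)" for a
  define Ln where "Ln a = arc_len k a" for a
  define q where "q a = (T a + Ln a - H a) div int n" for a
  have TLH: "T a + Ln a = H a + int n * q a" for a
  proof -
    have "(T a + Ln a - H a) mod int n = 0"
      using arc_mod[OF n, of l k a] unfolding T_def H_def Ln_def by (simp add: mod_eq_dvd_iff[symmetric])
    then show ?thesis unfolding q_def by (metis add.commute diff_add_cancel mult_div_mod_eq add_0 mult.commute)
  qed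
  have rot: "map (arc_head n l k) C = rotate1 (map (arc_tail n l k) C)"
  proof (rule nth_equalityI)
    show "length (map (arc_head n l k) C) = length (rotate1 (map (arc_tail n l k) C))" by simp
    fix i assume "i < length (map (arc_head n l k) C)"
    then have i: "i < length C" by simp
    show "map (arc_head n l k) C ! i = rotate1 (map (arc_tail n l k) C) ! i"
    proof -
      have "Suc i mod length C < length C" using i mod_less_divisor[of "length C" "Suc i"] by linarith
      then show ?thesis using hd[OF i] i by (simp add: nth_rotate1)
    qed
  qed
  have HT: "(\<Sum>a\<leftarrow>C. f (int (arc_head n l k a))) = (\<Sum>a\<leftarrow>C. f (int (arc_tail n l k a)))" for f :: "int \<Rightarrow> int"
  proof -
    have "(\<Sum>a\<leftarrow>C. f (int (arc_head n l k a))) = sum_list (map (\<lambda>x. f (int x)) (map (arc_head n l k) C))"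
      by (simp add: comp_def)
    also have "\<dots> = sum_list (map (\<lambda>x. f (int x)) (map (arc_tail n l k) C))"
      unfolding rot by (rule sum_rot)
    finally show ?thesis by (simp add: comp_def)
  qed
  have "p * int n = (\<Sum>a\<leftarrow>C. Ln a)" using assms(4) unfolding winding_number_def Ln_def by simp
  also have "\<dots> = (\<Sum>a\<leftarrow>C. H a + int n * q a - T a)" using TLH by (metis add_diff_cancel_left')
  also have "\<dots> = (\<Sum>a\<leftarrow>C. H a) + int n * (\<Sum>a\<leftarrow>C. q a) - (\<Sum>a\<leftarrow>C. T a)"
    by (simp add: sum_list_addf sum_list_subtractf sum_list_const_mult)
  also have "(\<Sum>a\<leftarrow>C. H a) = (\<Sum>a\<leftarrow>C. T a)" unfolding H_def T_def using HT[of "\<lambda>x. x"] by simp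
  finally have "p * int n = int n * (\<Sum>a\<leftarrow>C. q a)" by simp
  then have pq: "p = (\<Sum>a\<leftarrow>C. q a)" using n by (simp add: mult.commute)
  define g where "g x = (x - int j) div int n" for x
  have gs: "g (H a + int n * q a) = g (H a) + q a" for a
  proof -
    have "H a + int n * q a - int j = (H a - int j) + q a * int n" by (simp add: algebra_simps)
    moreover have "((H a - int j) + q a * int n) div int n = (H a - int j) div int n + q a"
      using n by simp
    ultimately show ?thesis unfolding g_def by metis
  qed
  have "(\<Sum>a\<leftarrow>C. g (T a + Ln a) - g (T a)) = (\<Sum>a\<leftarrow>C. g (H a) + q a - g (T a))"
    by (simp add: TLH gs)
  also have "\<dots> = (\<Sum>a\<leftarrow>C. g (H a)) + (\<Sum>a\<leftarrow>C. q a) - (\<Sum>a\<leftarrow>C. g (T a))"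
    by (simp add: sum_list_addf sum_list_subtractf)
  also have "(\<Sum>a\<leftarrow>C. g (H a)) = (\<Sum>a\<leftarrow>C. g (T a))" unfolding H_def T_def using HT[of g] by simp
  finally have sg: "(\<Sum>a\<leftarrow>C. g (T a + Ln a) - g (T a)) = p" using pq by simp
  define cj where "cj a = (if (\<exists>i. a = RowArc i \<and> jumps_over n l k i j) then 1 else 0)
     + (if a = FwdArc j then 1 else 0) - (if a = RevArc j then (1::int) else 0)" for a
  have pa: "g (T a + Ln a) - g (T a) = cj a" if a: "a \<in> set C" for a
  proof -
    have aF: "a \<in> F_arcs m n" using a CF by blast
    then consider (R) i where "a = RowArc i" "i \<in> {1..m}" | (F) j' where "a = FwdArc j'" "j' \<in> {1..n}"
      | (V) j' where "a = RevArc j'" "j' \<in> {1..n}" unfolding F_arcs_def by blast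
    then show ?thesis
    proof cases
      case R
      have "k i < n" using cw[OF R(2)] n by linarith
      then show ?thesis using row_c[OF n _ j, of k i l] R unfolding g_def T_def Ln_def cj_def by simp
    next
      case F then show ?thesis using fwd_c[OF n j F(2), of l k] unfolding g_def T_def Ln_def cj_def by auto
    next
      case V then show ?thesis using rev_c[OF n j V(2), of l k] unfolding g_def T_def Ln_def cj_def by auto
    qed
  qed
  have "(\<Sum>a\<leftarrow>C. cj a) = p" using sg pa by (metis (no_types, lifting) map_eq_conv)
  then have "sum cj (set C) = p" using distC by (simp add: sum_list_distinct_conv_sum_set)
  moreover have "sum cj (set C) = (\<Sum>a\<in>set C. (if (\<exists>i. a = RowArc i \<and> jumps_over n l k i j) then 1 else 0))
      + (\<Sum>a\<in>set C. (if a = FwdArc j then 1 else 0)) - (\<Sum>a\<in>set C. (if a = RevArc j then (1::int) else 0))"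
    unfolding cj_def by (simp add: sum.distrib sum_subtractf)
  moreover have "(\<Sum>a\<in>set C. (if (\<exists>i. a = RowArc i \<and> jumps_over n l k i j) then 1 else (0::int)))
      = int (row_jumps n l k C j)"
  proof -
    have "(\<Sum>a\<in>set C. (if (\<exists>i. a = RowArc i \<and> jumps_over n l k i j) then 1 else (0::int)))
       = (\<Sum>a\<in>set C \<inter> {a. \<exists>i. a = RowArc i \<and> jumps_over n l k i j}. 1)"
    proof -
      have "(\<Sum>a\<in>set C \<inter> {a. \<exists>i. a = RowArc i \<and> jumps_over n l k i j}. (1::int))
          = (\<Sum>a\<in>set C. if a \<in> {a. \<exists>i. a = RowArc i \<and> jumps_over n l k i j} then 1 else 0)"
        by (rule sum.inter_restrict) simp
      then show ?thesis by simp
    qed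
    also have "\<dots> = int (card (set C \<inter> {a. \<exists>i. a = RowArc i \<and> jumps_over n l k i j}))" by simp
    also have "set C \<inter> {a. \<exists>i. a = RowArc i \<and> jumps_over n l k i j} = RowArc ` {i. RowArc i \<in> set C \<and> jumps_over n l k i j}"
      by auto
    also have "card \<dots> = row_jumps n l k C j" unfolding row_jumps_def
      by (rule card_image) (simp add: inj_on_def)
    finally show ?thesis .
  qed
  moreover have "(\<Sum>a\<in>set C. (if a = FwdArc j then 1 else (0::int))) = (if j \<in> circ_nodes C then 1 else 0)"
    unfolding circ_nodes_def by (simp add: sum.delta')
  moreover have "(\<Sum>a\<in>set C. (if a = RevArc j then 1 else (0::int))) = (if j \<in> otimes_nodes C then 1 else 0)"
    unfolding otimes_nodes_def by (simp add: sum.delta')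
  ultimately have main: "p = int (row_jumps n l k C j) + (if j \<in> circ_nodes C then 1 else 0) - (if j \<in> otimes_nodes C then 1 else 0)"
    by simp
  have nb: "\<not> (j \<in> circ_nodes C \<and> j \<in> otimes_nodes C)"
    using not_both[OF n j assms(2) assms(3)] unfolding circ_nodes_def otimes_nodes_def by blast
  show "(j \<in> circ_nodes C \<longrightarrow> int (row_jumps n l k C j) = p - 1) \<and>
           (j \<in> otimes_nodes C \<longrightarrow> int (row_jumps n l k C j) = p + 1) \<and>
           (j \<in> bullet_nodes n C \<longrightarrow> int (row_jumps n l k C j) = p)"
    using main nb j unfolding bullet_nodes_def by auto
qed

end
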